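(* Let $d\ge 1$ and $1\le e\le d$ be integers, let $I\subset\mathbb{Z}^e$ be a finite index set with cardinality $|I|$, and let $\delta>0$. Let $$D^\delta_I:=\left\{x=(x_i)_{i\in I}\in\left([0,1]^d\right)^I:\ \Vert x_i-x_j\Vert\ge\delta \text{ whenever } i\neq j\right\},$$ where $\Vert\cdot\Vert$ is the Euclidean norm. For $x=(x_i)_{i\in I}\in([0,1]^d)^I$ and $i\in I$, let $C_i(x)$ denote the Voronoi cell $$C_i(x):=\left\{\omega\in[0,1]^d:\ \Vert x_i-\omega\Vert<\Vert x_k-\omega\Vert \text{ for all } k\neq i\right\},$$ where points $\omega$ equidistant from several nearest centroids are assigned to exactly one of the corresponding cells according to the lexicographical order on $I$ (so that $(C_i(x))_{i\in I}$ is a partition of $[0,1]^d$). Let $\lambda$ be the Lebesgue measure on $[0,1]^d$ and $E^c$ the complement of $E$ in $[0,1]^d$. For $0<\alpha<\delta/2$, $x\in D^\delta_I$ and $i\in I$, let $$U^\alpha_i(x)=\left\{\omega\in[0,1]^d:\ \exists\, y\in D^\delta_I \text{ with } y_j=x_j \text{ for all } j\neq i,\ \Vert x_i-y_i\Vert<\alpha,\ \text{and } \omega\in C_i(y)^c\cap C_i(x)\right\}.$$ Then $$\sup_{x\in D^\delta_I}\lambda\left(U^\alpha_i(x)\right)<\left(|I|-1\right)\left(\frac{2\alpha}{\delta}+\alpha\right)\left(\sqrt{2}\right)^{d-1}.$$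
   Context: $U^\alpha_i(x)$ is the set of points that leave the Voronoi cell of unit $i$ when the centroid $x_i$ alone is moved by less than $\alpha$ (staying in $D^\delta_I$). *)

theory Defs
  imports "HOL-Analysis.Analysis"
begin

text \<open>Indices in I \<subseteq> Z^e are represented as integer lists of length e;
  the lexicographical order on I is lexordp (strict lexicographic order on lists).
  Configurations x = (x_i)_{i in I} are functions from indices to points of R^d
  (values outside I are irrelevant).\<close>

definition config_space :: "int list set \<Rightarrow> real \<Rightarrow> (int list \<Rightarrow> real^'d) set" where
  "config_space I \<delta> =
     {x. (\<forall>i\<in>I. x i \<in> cbox 0 One) \<and>
         (\<forall>i\<in>I. \<forall>j\<in>I. i \<noteq> j \<longrightarrow> dist (x i) (x j) \<ge> \<delta>)}"

definition voronoi_cell :: "int list set \<Rightarrow> (int list \<Rightarrow> real^'d) \<Rightarrow> int list \<Rightarrow> (real^'d) set" where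
  "voronoi_cell I x i =
     {\<omega> \<in> cbox 0 One.
        (\<forall>k\<in>I. dist (x i) \<omega> \<le> dist (x k) \<omega>) \<and>
        (\<forall>k\<in>I. k \<noteq> i \<and> dist (x k) \<omega> = dist (x i) \<omega> \<longrightarrow> lexordp (<) i k)}"

definition U_set :: "int list set \<Rightarrow> real \<Rightarrow> real \<Rightarrow> (int list \<Rightarrow> real^'d) \<Rightarrow> int list \<Rightarrow> (real^'d) set" where
  "U_set I \<delta> \<alpha> x i =
     {\<omega> \<in> cbox 0 One. \<exists>y\<in>config_space I \<delta>.
        (\<forall>j\<in>I. j \<noteq> i \<longrightarrow> y j = x j) \<and> dist (x i) (y i) < \<alpha> \<and>
        \<omega> \<in> (cbox 0 One - voronoi_cell I y i) \<inter> voronoi_cell I x i}"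

end

theory Submission
  imports Defs
begin


lemma sum_Basis_cart: "(\<Sum>x\<in>(Basis::(real^'d) set). x $ i) = 1"
proof -
  have ax: "axis i (1::real) \<in> (Basis::(real^'d) set)" by simp
  have "(\<Sum>x\<in>(Basis::(real^'d) set). x $ i) = (\<Sum>b\<in>(Basis::(real^'d) set). b \<bullet> axis i 1)"
    by (rule sum.cong) (auto simp: inner_axis)
  also have "\<dots> = (\<Sum>b\<in>(Basis::(real^'d) set). if b = axis i 1 then 1 else 0)"
    by (rule sum.cong) (use ax in \<open>auto simp: inner_Basis\<close>)
  also have "\<dots> = 1" using ax by simp
  finally show ?thesis .
qed

lemma slab_box:
  fixes j :: "'d::finite" and t :: real
  assumes "t \<ge> 0"
  shows "emeasure lebesgue (cbox (0::real^'d) (\<chi> k. if k = j then 1 + t else 1)) = ennreal (1 + t)"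
proof -
  define B where "B = cbox (0::real^'d) (\<chi> k. if k = j then 1 + t else 1)"
  have ne: "B \<noteq> {}"
    using assms by (auto simp: interval_eq_empty_cart B_def)
  have "emeasure lebesgue B = emeasure lborel B" by (simp add: B_def)
  also have fin: "emeasure lborel B < \<infinity>" unfolding B_def by (rule emeasure_lborel_cbox_finite)
  hence "emeasure lborel B = ennreal (measure lborel B)"
    unfolding measure_def by (simp add: ennreal_enn2real less_top)
  also have "measure lborel B = (\<Prod>k\<in>UNIV. (if k = j then 1 + t else 1))"
    using content_cbox_cart[OF ne[unfolded B_def]] by (simp add: B_def)
  also have "\<dots> = 1 + t"
    by (simp add: prod.delta)
  finally show ?thesis unfolding B_def .
qed

lemma slab_measure:
  fixes v :: "real^'d" and j :: 'd and c h :: real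
  assumes vj: "v$j \<noteq> 0" and h: "h > 0"
  shows "emeasure lebesgue {\<omega> \<in> cbox 0 One. c \<le> \<omega> \<bullet> v \<and> \<omega> \<bullet> v < c + h} \<le> ennreal (h / \<bar>v$j\<bar>)"
proof -
  define S where "S = {\<omega> \<in> cbox (0::real^'d) One. c \<le> \<omega> \<bullet> v \<and> \<omega> \<bullet> v < c + h}"
  define \<tau> where "\<tau> = h / \<bar>v$j\<bar>"
  have tau: "\<tau> > 0" using vj h by (simp add: \<tau>_def)
  define e :: "real^'d" where "e = axis j 1"
  have ev: "e \<bullet> v = v$j" by (simp add: e_def inner_axis')
  have Sb: "S \<in> sets borel" unfolding S_def by measurable
  hence Sl: "S \<in> sets lebesgue" by simp
  have Ssub: "S \<subseteq> cbox 0 One" unfolding S_def by auto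
  have "emeasure lebesgue S \<le> emeasure lebesgue (cbox (0::real^'d) One)"
    by (rule emeasure_mono[OF Ssub]) simp
  also have "\<dots> < \<infinity>" using emeasure_lborel_cbox_finite by simp
  finally have fin: "emeasure lebesgue S < \<infinity>" .
  define \<mu> where "\<mu> = measure lebesgue S"
  have Seq: "emeasure lebesgue S = ennreal \<mu>"
    unfolding \<mu>_def measure_def using fin by (simp add: ennreal_enn2real less_top)
  have mu0: "\<mu> \<ge> 0" unfolding \<mu>_def by simp
  define T where "T m = (\<lambda>\<omega>. (real m * \<tau>) *\<^sub>R e + \<omega>) ` S" for m :: nat
  have Tmeas: "emeasure lebesgue (T m) = emeasure lebesgue S" for m
  proof -
    have "T m = (\<lambda>x. 1 *\<^sub>R x + (real m * \<tau>) *\<^sub>R e) ` S"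
      unfolding T_def by (auto simp: add.commute)
    then show ?thesis using emeasure_lebesgue_affine[of 1 "(real m * \<tau>) *\<^sub>R e" S] by simp
  qed
  have Tsets: "T m \<in> sets lebesgue" for m
    unfolding T_def by (rule lebesgue_sets_translation[OF Sl])
  have Tdisj: "disjoint_family_on T UNIV"
  proof (unfold disjoint_family_on_def, intro ballI impI)
    fix m n :: nat assume "m \<noteq> n"
    show "T m \<inter> T n = {}"
    proof (rule ccontr)
      assume "T m \<inter> T n \<noteq> {}"
      then obtain a b where a: "a \<in> S" and b: "b \<in> S"
        and eq: "(real m * \<tau>) *\<^sub>R e + a = (real n * \<tau>) *\<^sub>R e + b"
        unfolding T_def by auto
      have "((real m * \<tau>) *\<^sub>R e + a) \<bullet> v = ((real n * \<tau>) *\<^sub>R e + b) \<bullet> v" using eq by simp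
      hence "real m * \<tau> * v$j + a \<bullet> v = real n * \<tau> * v$j + b \<bullet> v"
        by (simp add: inner_add_left ev)
      hence d: "a \<bullet> v - b \<bullet> v = (real n - real m) * (\<tau> * v$j)" by (simp add: algebra_simps)
      have "\<bar>real n - real m\<bar> \<ge> 1" using \<open>m \<noteq> n\<close> by linarith
      hence "\<bar>a \<bullet> v - b \<bullet> v\<bar> \<ge> 1 * \<bar>\<tau> * v$j\<bar>" unfolding d abs_mult
        by (intro mult_right_mono) auto
      also have "\<bar>\<tau> * v$j\<bar> = h" using vj h by (simp add: \<tau>_def abs_mult)
      finally have "\<bar>a \<bullet> v - b \<bullet> v\<bar> \<ge> h" by simp
      moreover have "\<bar>a \<bullet> v - b \<bullet> v\<bar> < h" using a b unfolding S_def by auto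
      ultimately show False by simp
    qed
  qed
  have Tbox: "T m \<subseteq> cbox (0::real^'d) (\<chi> k. if k = j then 1 + real N * \<tau> else 1)" if "m < N" for m N
  proof
    fix z assume "z \<in> T m"
    then obtain a where a: "a \<in> S" and z: "z = (real m * \<tau>) *\<^sub>R e + a" unfolding T_def by auto
    have a01: "0 \<le> a$k \<and> a$k \<le> 1" for k using a unfolding S_def by (auto simp: mem_box_cart sum_Basis_cart)
    have "real m * \<tau> \<le> real N * \<tau>" using that tau by (intro mult_right_mono) auto
    moreover have "0 \<le> real m * \<tau>" using tau by simp
    ultimately show "z \<in> cbox (0::real^'d) (\<chi> k. if k = j then 1 + real N * \<tau> else 1)"
      unfolding z mem_box_cart
    proof (intro allI)
      fix k
      assume A: "real m * \<tau> \<le> real N * \<tau>" "0 \<le> real m * \<tau>"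
      show "0 $ k \<le> ((real m * \<tau>) *\<^sub>R e + a) $ k \<and>
          ((real m * \<tau>) *\<^sub>R e + a) $ k \<le> (\<chi> k. if k = j then 1 + real N * \<tau> else 1) $ k"
        using a01[of k] A by (cases "k = j") (auto simp: e_def axis_def)
    qed
  qed
  have key: "real N * \<mu> \<le> 1 + real N * \<tau>" for N
  proof -
    have "ennreal (real N * \<mu>) = (\<Sum>m<N. emeasure lebesgue (T m))"
      by (simp add: Tmeas Seq ennreal_mult' mu0 ennreal_of_nat_eq_real_of_nat)
    also have "\<dots> = emeasure lebesgue (\<Union>m<N. T m)"
      by (rule sum_emeasure) (use Tsets disjoint_family_on_mono[OF _ Tdisj] in auto)
    also have "\<dots> \<le> emeasure lebesgue (cbox (0::real^'d) (\<chi> k. if k = j then 1 + real N * \<tau> else 1))"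
      by (rule emeasure_mono) (use Tbox in auto)
    also have "\<dots> = ennreal (1 + real N * \<tau>)"
      by (rule slab_box) (use tau in simp)
    finally have "ennreal (real N * \<mu>) \<le> ennreal (1 + real N * \<tau>)" .
    moreover have "0 \<le> 1 + real N * \<tau>" using tau by simp
    ultimately show ?thesis using ennreal_le_iff by blast
  qed
  have "\<mu> \<le> \<tau>"
  proof (rule ccontr)
    assume "\<not> \<mu> \<le> \<tau>"
    hence pos: "\<mu> - \<tau> > 0" by simp
    obtain N :: nat where N: "1 / (\<mu> - \<tau>) < real N" using reals_Archimedean2 by blast
    hence "1 < real N * (\<mu> - \<tau>)" using pos by (simp add: field_simps)
    with key[of N] show False by (simp add: algebra_simps)
  qed
  thus ?thesis using Seq unfolding S_def \<tau>_def by (simp add: ennreal_leI)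
qed



lemma dist_cube_le:
  fixes x y :: "real^'d"
  assumes "x \<in> cbox 0 One" "y \<in> cbox 0 One"
  shows "dist x y \<le> sqrt (real CARD('d))"
proof -
  have "dist x y = L2_set (\<lambda>i. dist (x$i) (y$i)) UNIV" by (simp add: dist_vec_def)
  also have "\<dots> \<le> L2_set (\<lambda>i. 1) (UNIV::'d set)"
  proof (rule L2_set_mono)
    fix i
    have "0 \<le> x$i \<and> x$i \<le> 1" "0 \<le> y$i \<and> y$i \<le> 1" using assms
      by (auto simp: mem_box_cart sum_Basis_cart)
    thus "dist (x$i) (y$i) \<le> 1" by (auto simp: dist_real_def)
  qed simp
  also have "\<dots> = sqrt (real CARD('d))" by (simp add: L2_set_constant)
  finally show ?thesis .
qed

lemma big_coord:
  fixes v :: "real^'d"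
  obtains j where "norm v \<le> sqrt (real CARD('d)) * \<bar>v$j\<bar>"
proof -
  have "finite (range (\<lambda>i. \<bar>v$i\<bar>))" by simp
  moreover have "range (\<lambda>i. \<bar>v$i\<bar>) \<noteq> {}" by simp
  ultimately have "Max (range (\<lambda>i. \<bar>v$i\<bar>)) \<in> range (\<lambda>i. \<bar>v$i\<bar>)" by (rule Max_in)
  then obtain j where j: "Max (range (\<lambda>i. \<bar>v$i\<bar>)) = \<bar>v$j\<bar>" by (erule rangeE)
  have le: "\<bar>v$i\<bar> \<le> \<bar>v$j\<bar>" for i
    using Max_ge[of "range (\<lambda>i. \<bar>v$i\<bar>)" "\<bar>v$i\<bar>"] j by auto
  have "norm v = L2_set (\<lambda>i. \<bar>v$i\<bar>) UNIV" by (simp add: norm_vec_def L2_set_def)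
  also have "\<dots> \<le> L2_set (\<lambda>i. \<bar>v$j\<bar>) (UNIV::'d set)"
    by (rule L2_set_mono) (use le in auto)
  also have "\<dots> = sqrt (real CARD('d)) * \<bar>v$j\<bar>" by (simp add: L2_set_constant)
  finally show ?thesis by (rule that)
qed

lemma sqrt2_bound: "real n + 1 \<le> 2 * sqrt 2 ^ n"
proof (induction n rule: nat_less_induct)
  case (1 n)
  have s: "1.4 \<le> sqrt (2::real)" by (rule real_le_rsqrt) (simp add: power2_eq_square)
  show ?case
  proof (cases "n \<le> 2")
    case True
    then consider "n = 0" | "n = 1" | "n = 2" by linarith
    then show ?thesis
    proof cases
      case 2 then show ?thesis using s by simp
    qed simp_all
  next
    case False
    then obtain m where m: "n = Suc m" "m \<ge> 2" by (cases n) auto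
    have IH: "real m + 1 \<le> 2 * sqrt 2 ^ m" using 1 m by simp
    have "real n + 1 \<le> 1.4 * (real m + 1)" using m by simp
    also have "\<dots> \<le> sqrt 2 * (2 * sqrt 2 ^ m)" using IH s
      by (intro mult_mono) auto
    also have "\<dots> = 2 * sqrt 2 ^ n" using m by simp
    finally show ?thesis .
  qed
qed



lemma pair_bound:
  fixes a b :: "real^'d" and \<alpha> \<delta> :: real
  assumes a: "a \<in> cbox 0 One" and b: "b \<in> cbox 0 One" and ab: "\<delta> \<le> dist a b"
    and \<delta>: "\<delta> > 0" and \<alpha>: "\<alpha> > 0"
  shows "{\<omega>\<in>cbox 0 One. dist a \<omega> \<le> dist b \<omega> \<and> dist b \<omega> < dist a \<omega> + \<alpha>} \<in> sets lebesgue"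
    and "emeasure lebesgue {\<omega>\<in>cbox 0 One. dist a \<omega> \<le> dist b \<omega> \<and> dist b \<omega> < dist a \<omega> + \<alpha>}
           \<le> ennreal (\<alpha> * real CARD('d) / \<delta>)"
proof -
  define A where "A = {\<omega>\<in>cbox (0::real^'d) One. dist a \<omega> \<le> dist b \<omega> \<and> dist b \<omega> < dist a \<omega> + \<alpha>}"
  have "A \<in> sets borel" unfolding A_def by measurable
  show "{\<omega>\<in>cbox 0 One. dist a \<omega> \<le> dist b \<omega> \<and> dist b \<omega> < dist a \<omega> + \<alpha>} \<in> sets lebesgue"
    using \<open>A \<in> sets borel\<close> unfolding A_def by simp
  define v where "v = a - b"
  define d where "d = sqrt (real CARD('d))"
  have d0: "d > 0" unfolding d_def by simp
  have dd: "d * d = real CARD('d)" unfolding d_def by simp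
  obtain j where j: "norm v \<le> d * \<bar>v$j\<bar>" using big_coord[of v] unfolding d_def by blast
  have nv: "norm v \<ge> \<delta>" using ab unfolding v_def by (simp add: dist_norm)
  have dvj: "\<delta> \<le> d * \<bar>v$j\<bar>" using nv j by linarith
  hence vj: "v$j \<noteq> 0" using \<delta> by auto
  define c where "c = (a \<bullet> a - b \<bullet> b) / 2"
  define h where "h = \<alpha> * d"
  have h0: "h > 0" unfolding h_def using \<alpha> d0 by simp
  have sub: "A \<subseteq> {\<omega> \<in> cbox 0 One. c \<le> \<omega> \<bullet> v \<and> \<omega> \<bullet> v < c + h}"
  proof
    fix \<omega> assume "\<omega> \<in> A"
    hence w: "\<omega> \<in> cbox 0 One" and l1: "dist a \<omega> \<le> dist b \<omega>" and l2: "dist b \<omega> < dist a \<omega> + \<alpha>"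
      unfolding A_def by auto
    have id: "(dist b \<omega>)\<^sup>2 - (dist a \<omega>)\<^sup>2 = 2 * (\<omega> \<bullet> v) - 2 * c"
      unfolding v_def c_def dist_norm power2_norm_eq_inner
      by (simp add: inner_diff_left inner_diff_right inner_commute algebra_simps field_simps)
    have "(dist a \<omega>)\<^sup>2 \<le> (dist b \<omega>)\<^sup>2" using l1 by (simp add: power_mono)
    hence g0: "c \<le> \<omega> \<bullet> v" using id by linarith
    have sum: "dist b \<omega> + dist a \<omega> \<le> 2 * d"
      using dist_cube_le[OF b w] dist_cube_le[OF a w] unfolding d_def by linarith
    have "(dist b \<omega>)\<^sup>2 - (dist a \<omega>)\<^sup>2 = (dist b \<omega> - dist a \<omega>) * (dist b \<omega> + dist a \<omega>)"
      by (simp add: power2_eq_square algebra_simps)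
    also have "\<dots> \<le> (dist b \<omega> - dist a \<omega>) * (2 * d)"
      using l1 sum by (intro mult_left_mono) auto
    also have "\<dots> < \<alpha> * (2 * d)"
      using l2 d0 by (intro mult_strict_right_mono) auto
    finally have "\<omega> \<bullet> v < c + h" using id unfolding h_def by linarith
    with g0 w show "\<omega> \<in> {\<omega> \<in> cbox 0 One. c \<le> \<omega> \<bullet> v \<and> \<omega> \<bullet> v < c + h}" by simp
  qed
  have "emeasure lebesgue A \<le> emeasure lebesgue {\<omega> \<in> cbox 0 One. c \<le> \<omega> \<bullet> v \<and> \<omega> \<bullet> v < c + h}"
  proof (rule emeasure_mono[OF sub])
    have "{\<omega> \<in> cbox (0::real^'d) One. c \<le> \<omega> \<bullet> v \<and> \<omega> \<bullet> v < c + h} \<in> sets borel" by measurable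
    thus "{\<omega> \<in> cbox (0::real^'d) One. c \<le> \<omega> \<bullet> v \<and> \<omega> \<bullet> v < c + h} \<in> sets lebesgue" by simp
  qed
  also have "\<dots> \<le> ennreal (h / \<bar>v$j\<bar>)" by (rule slab_measure[OF vj h0])
  also have "h / \<bar>v$j\<bar> \<le> \<alpha> * real CARD('d) / \<delta>"
  proof -
    have "\<alpha> * d * \<delta> \<le> \<alpha> * d * (d * \<bar>v$j\<bar>)"
      using dvj \<alpha> d0 by (intro mult_left_mono) auto
    also have "\<dots> = \<alpha> * real CARD('d) * \<bar>v$j\<bar>" using dd by (simp add: algebra_simps)
    finally have "\<alpha> * d * \<delta> \<le> \<alpha> * real CARD('d) * \<bar>v$j\<bar>" .
    thus ?thesis using vj \<delta> unfolding h_def by (simp add: field_simps)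
  qed
  hence "ennreal (h / \<bar>v$j\<bar>) \<le> ennreal (\<alpha> * real CARD('d) / \<delta>)" by (rule ennreal_leI)
  finally show "emeasure lebesgue {\<omega>\<in>cbox 0 One. dist a \<omega> \<le> dist b \<omega> \<and> dist b \<omega> < dist a \<omega> + \<alpha>}
           \<le> ennreal (\<alpha> * real CARD('d) / \<delta>)" unfolding A_def .
qed



lemma closed_ex_dist:
  fixes K :: "'a::metric_space set"
  assumes K: "compact K"
  shows "closed {\<omega>. \<exists>z\<in>K. dist a \<omega> + c \<le> dist z \<omega>}"
proof (unfold closed_sequential_limits, intro allI impI, elim conjE)
  fix s l
  assume s: "\<forall>n. s n \<in> {\<omega>. \<exists>z\<in>K. dist a \<omega> + c \<le> dist z \<omega>}" and lim: "s \<longlonglongrightarrow> l"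
  from s have "\<forall>n. \<exists>z. z \<in> K \<and> dist a (s n) + c \<le> dist z (s n)" by auto
  from choice[OF this] obtain z where z0: "\<forall>n. z n \<in> K \<and> dist a (s n) + c \<le> dist (z n) (s n)" by blast
  hence z: "\<And>n. z n \<in> K \<and> dist a (s n) + c \<le> dist (z n) (s n)" by blast
  have zK: "\<forall>n. z n \<in> K" using z by blast
  have sc: "seq_compact K" using K by (rule compact_imp_seq_compact)
  obtain zz r where zz: "zz \<in> K" and r: "strict_mono r" and lz: "(z \<circ> r) \<longlonglongrightarrow> zz"
    by (rule seq_compactE[OF sc zK])
  have ls: "(s \<circ> r) \<longlonglongrightarrow> l" using lim r by (rule LIMSEQ_subseq_LIMSEQ)
  have t1: "(\<lambda>n. dist a ((s \<circ> r) n) + c) \<longlonglongrightarrow> dist a l + c"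
    by (intro tendsto_intros ls)
  have t2: "(\<lambda>n. dist ((z \<circ> r) n) ((s \<circ> r) n)) \<longlonglongrightarrow> dist zz l"
    by (intro tendsto_intros ls lz)
  have "dist a l + c \<le> dist zz l"
    by (rule LIMSEQ_le[OF t1 t2]) (use z in auto)
  with zz show "l \<in> {\<omega>. \<exists>z\<in>K. dist a \<omega> + c \<le> dist z \<omega>}" by auto
qed

lemma voronoi_borel:
  assumes fin: "finite I"
  shows "voronoi_cell I (x :: int list \<Rightarrow> real^'d) i \<in> sets borel"
proof -
  have eq: "voronoi_cell I x i = cbox 0 One \<inter> (\<Inter>k\<in>I. {\<omega>. dist (x i) \<omega> \<le> dist (x k) \<omega>})
     \<inter> (\<Inter>k\<in>I. {\<omega>. k \<noteq> i \<and> dist (x k) \<omega> = dist (x i) \<omega> \<longrightarrow> lexordp (<) i k})"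
    unfolding voronoi_cell_def by auto
  have b1: "{\<omega>. dist (x i) \<omega> \<le> dist (x k) \<omega>} \<in> sets borel" for k by measurable
  have b2: "{\<omega>. k \<noteq> i \<and> dist (x k) \<omega> = dist (x i) \<omega> \<longrightarrow> lexordp (<) i k} \<in> sets borel" for k
    by measurable
  show ?thesis
  proof (cases "I = {}")
    case True
    have "voronoi_cell I x i = cbox 0 One" unfolding voronoi_cell_def True by auto
    thus ?thesis by (simp add: borel_closed)
  next
    case False
    show ?thesis unfolding eq
      using fin b1 b2 False by (intro sets.Int sets.finite_INT) auto
  qed
qed

lemma U_bound:
  fixes x :: "int list \<Rightarrow> real^'d"
  assumes fin: "finite I" and x: "x \<in> config_space I \<delta>" and i: "i \<in> I" and \<delta>: "\<delta> > 0" and \<alpha>: "\<alpha> > 0"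
  shows "emeasure lebesgue (U_set I \<delta> \<alpha> x i) \<le> ennreal ((real (card I) - 1) * (\<alpha> * real CARD('d) / \<delta>))"
proof -
  define A where "A k = {\<omega>\<in>cbox 0 One. dist (x i) \<omega> \<le> dist (x k) \<omega> \<and> dist (x k) \<omega> < dist (x i) \<omega> + \<alpha>}" for k
  have xc: "x j \<in> cbox 0 One" if "j \<in> I" for j using x that unfolding config_space_def by auto
  have xd: "\<delta> \<le> dist (x j) (x k)" if "j \<in> I" "k \<in> I" "j \<noteq> k" for j k
    using x that unfolding config_space_def by auto
  have Ak: "A k \<in> sets lebesgue" "emeasure lebesgue (A k) \<le> ennreal (\<alpha> * real CARD('d) / \<delta>)"
    if "k \<in> I - {i}" for k
  proof -
    have k: "k \<in> I" "i \<noteq> k" using that by auto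
    show "A k \<in> sets lebesgue" "emeasure lebesgue (A k) \<le> ennreal (\<alpha> * real CARD('d) / \<delta>)"
      using pair_bound[OF xc[OF i] xc[OF k(1)] xd[OF i k(1) k(2)] \<delta> \<alpha>] unfolding A_def by auto
  qed
  have sub: "U_set I \<delta> \<alpha> x i \<subseteq> (\<Union>k\<in>I-{i}. A k)"
  proof
    fix \<omega> assume "\<omega> \<in> U_set I \<delta> \<alpha> x i"
    then obtain y where w: "\<omega> \<in> cbox 0 One" and y: "y \<in> config_space I \<delta>"
      and agree: "\<forall>j\<in>I. j \<noteq> i \<longrightarrow> y j = x j" and dy: "dist (x i) (y i) < \<alpha>"
      and ny: "\<omega> \<notin> voronoi_cell I y i" and vx: "\<omega> \<in> voronoi_cell I x i"
      unfolding U_set_def by auto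
    from ny w obtain k where k: "k \<in> I" and
      kc: "\<not> dist (y i) \<omega> \<le> dist (y k) \<omega> \<or> (k \<noteq> i \<and> dist (y k) \<omega> = dist (y i) \<omega> \<and> \<not> lexordp (<) i k)"
      unfolding voronoi_cell_def by auto
    have ki: "k \<noteq> i" using kc by auto
    have yk: "y k = x k" using agree k ki by auto
    have l1: "dist (x k) \<omega> \<le> dist (y i) \<omega>" using kc yk by auto
    have "dist (y i) \<omega> \<le> dist (y i) (x i) + dist (x i) \<omega>" by (rule dist_triangle)
    hence l2: "dist (x k) \<omega> < dist (x i) \<omega> + \<alpha>" using l1 dy by (simp add: dist_commute)
    have l3: "dist (x i) \<omega> \<le> dist (x k) \<omega>" using vx k unfolding voronoi_cell_def by auto
    show "\<omega> \<in> (\<Union>k\<in>I-{i}. A k)" using k ki l2 l3 w unfolding A_def by auto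
  qed
  have UA: "(\<Union>k\<in>I-{i}. A k) \<in> sets lebesgue"
    by (rule sets.finite_UN) (use fin Ak(1) in auto)
  have "emeasure lebesgue (U_set I \<delta> \<alpha> x i) \<le> emeasure lebesgue (\<Union>k\<in>I-{i}. A k)"
    by (rule emeasure_mono[OF sub UA])
  also have "\<dots> \<le> (\<Sum>k\<in>I-{i}. emeasure lebesgue (A k))"
    by (rule emeasure_subadditive_finite) (use fin Ak(1) in auto)
  also have "\<dots> \<le> (\<Sum>k\<in>I-{i}. ennreal (\<alpha> * real CARD('d) / \<delta>))"
    by (rule sum_mono) (use Ak in auto)
  also have "\<dots> = of_nat (card (I - {i})) * ennreal (\<alpha> * real CARD('d) / \<delta>)"
    by simp
  also have "\<dots> = ennreal (real (card (I - {i})) * (\<alpha> * real CARD('d) / \<delta>))"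
    unfolding ennreal_of_nat_eq_real_of_nat by (rule ennreal_mult'[symmetric]) simp
  also have "real (card (I - {i})) = real (card I) - 1"
  proof -
    have "card {i} \<le> card I" using card_mono[of I "{i}"] fin i by simp
    hence "card I \<ge> 1" by simp
    thus ?thesis using fin i by (simp add: card_Diff_singleton of_nat_diff)
  qed
  finally show ?thesis .
qed



lemma U_meas:
  fixes x :: "int list \<Rightarrow> real^'d"
  assumes fin: "finite I" and x: "x \<in> config_space I \<delta>" and i: "i \<in> I" and \<alpha>: "\<alpha> > 0"
  shows "U_set I \<delta> \<alpha> x i \<in> sets lebesgue"
proof -
  define Y where "Y n = cbox (0::real^'d) One \<inter> cball (x i) (\<alpha> - 1/real(Suc n)) \<inter> (\<Inter>j\<in>I-{i}. - ball (x j) \<delta>)" for n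
  have Ycomp: "compact (Y n)" for n unfolding Y_def
    by (intro compact_Int_closed compact_cbox closed_cball closed_INT closed_Compl open_ball ballI)
  have Ymem: "z \<in> Y n \<longleftrightarrow> z \<in> cbox 0 One \<and> dist (x i) z \<le> \<alpha> - 1/real(Suc n) \<and> (\<forall>j\<in>I-{i}. \<delta> \<le> dist (x j) z)" for z n
    unfolding Y_def by (auto simp: not_less)
  define cc where "cc k n = (if lexordp (<) i k then 1/real(Suc n) else 0)" for k n
  define F where "F k n = {\<omega>. \<exists>z\<in>Y n. dist (x k) \<omega> + cc k n \<le> dist z \<omega>}" for k n
  have Fclosed: "closed (F k n)" for k n unfolding F_def by (rule closed_ex_dist[OF Ycomp])
  have xc: "x j \<in> cbox 0 One" if "j \<in> I" for j using x that unfolding config_space_def by auto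
  have xd: "\<delta> \<le> dist (x j) (x k)" if "j \<in> I" "k \<in> I" "j \<noteq> k" for j k
    using x that unfolding config_space_def by auto
  have eq: "U_set I \<delta> \<alpha> x i = voronoi_cell I x i \<inter> (\<Union>k\<in>I-{i}. \<Union>n. F k n)"
  proof
    show "U_set I \<delta> \<alpha> x i \<subseteq> voronoi_cell I x i \<inter> (\<Union>k\<in>I-{i}. \<Union>n. F k n)"
    proof
      fix \<omega> assume "\<omega> \<in> U_set I \<delta> \<alpha> x i"
      then obtain y where w: "\<omega> \<in> cbox 0 One" and y: "y \<in> config_space I \<delta>"
        and agree: "\<forall>j\<in>I. j \<noteq> i \<longrightarrow> y j = x j" and dy: "dist (x i) (y i) < \<alpha>"
        and ny: "\<omega> \<notin> voronoi_cell I y i" and vx: "\<omega> \<in> voronoi_cell I x i"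
        unfolding U_set_def by auto
      from ny w obtain k where k: "k \<in> I" and
        kc: "\<not> dist (y i) \<omega> \<le> dist (y k) \<omega> \<or> (k \<noteq> i \<and> dist (y k) \<omega> = dist (y i) \<omega> \<and> \<not> lexordp (<) i k)"
        unfolding voronoi_cell_def by auto
      have ki: "k \<noteq> i" using kc by auto
      have yk: "y k = x k" using agree k ki by auto
      have zc: "y i \<in> cbox 0 One" using y i unfolding config_space_def by auto
      have zd: "\<forall>j\<in>I-{i}. \<delta> \<le> dist (x j) (y i)"
      proof
        fix j assume j: "j \<in> I - {i}"
        hence "\<delta> \<le> dist (y j) (y i)" using y i unfolding config_space_def by auto
        thus "\<delta> \<le> dist (x j) (y i)" using agree j by auto
      qed
      define \<epsilon> where "\<epsilon> = (if lexordp (<) i k then min (\<alpha> - dist (x i) (y i)) (dist (y i) \<omega> - dist (x k) \<omega>)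
                         else \<alpha> - dist (x i) (y i))"
      have lexc: "dist (x k) \<omega> < dist (y i) \<omega>" if "lexordp (<) i k" using kc yk that by auto
      have nlexc: "dist (x k) \<omega> \<le> dist (y i) \<omega>" using kc yk by auto
      have "\<epsilon> > 0" unfolding \<epsilon>_def using dy lexc by auto
      then obtain n where n: "inverse (real (Suc n)) < \<epsilon>" using reals_Archimedean by blast
      have n1: "1 / real (Suc n) < \<alpha> - dist (x i) (y i)"
        using n unfolding \<epsilon>_def by (auto simp: inverse_eq_divide split: if_splits)
      have "y i \<in> Y n" unfolding Ymem using zc zd n1 by auto
      moreover have "dist (x k) \<omega> + cc k n \<le> dist (y i) \<omega>"
      proof (cases "lexordp (<) i k")
        case True
        hence "1 / real (Suc n) < dist (y i) \<omega> - dist (x k) \<omega>"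
          using n unfolding \<epsilon>_def by (auto simp: inverse_eq_divide)
        thus ?thesis using True unfolding cc_def by auto
      next
        case False
        thus ?thesis using nlexc unfolding cc_def by auto
      qed
      ultimately have "\<omega> \<in> F k n" unfolding F_def by auto
      thus "\<omega> \<in> voronoi_cell I x i \<inter> (\<Union>k\<in>I-{i}. \<Union>n. F k n)" using vx k ki by auto
    qed
  next
    show "voronoi_cell I x i \<inter> (\<Union>k\<in>I-{i}. \<Union>n. F k n) \<subseteq> U_set I \<delta> \<alpha> x i"
    proof
      fix \<omega> assume "\<omega> \<in> voronoi_cell I x i \<inter> (\<Union>k\<in>I-{i}. \<Union>n. F k n)"
      then obtain k n where vx: "\<omega> \<in> voronoi_cell I x i" and k: "k \<in> I" "k \<noteq> i" and Fk: "\<omega> \<in> F k n"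
        by auto
      from Fk obtain z where z: "z \<in> Y n" and zw: "dist (x k) \<omega> + cc k n \<le> dist z \<omega>"
        unfolding F_def by auto
      have zc: "z \<in> cbox 0 One" and zi: "dist (x i) z \<le> \<alpha> - 1/real(Suc n)"
        and zd: "\<forall>j\<in>I-{i}. \<delta> \<le> dist (x j) z" using z unfolding Ymem by auto
      define y where "y = x(i := z)"
      have w: "\<omega> \<in> cbox 0 One" using vx unfolding voronoi_cell_def by auto
      have yc: "y \<in> config_space I \<delta>"
        unfolding config_space_def
      proof (intro CollectI conjI ballI impI)
        fix j assume "j \<in> I" thus "y j \<in> cbox 0 One" using xc zc unfolding y_def by auto
      next
        fix j l assume jl: "j \<in> I" "l \<in> I" "j \<noteq> l"
        show "\<delta> \<le> dist (y j) (y l)"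
        proof (cases "j = i")
          case True thus ?thesis using jl zd unfolding y_def by (auto simp: dist_commute)
        next
          case False
          show ?thesis
          proof (cases "l = i")
            case True thus ?thesis using jl zd False unfolding y_def by auto
          next
            case False2: False
            thus ?thesis using jl False xd unfolding y_def by auto
          qed
        qed
      qed
      have agree: "\<forall>j\<in>I. j \<noteq> i \<longrightarrow> y j = x j" unfolding y_def by auto
      have "0 < 1 / real (Suc n)" by simp
      hence "dist (x i) z < \<alpha>" using zi by linarith
      hence dy: "dist (x i) (y i) < \<alpha>" unfolding y_def by simp
      have ny: "\<omega> \<notin> voronoi_cell I y i"
      proof
        assume vy: "\<omega> \<in> voronoi_cell I y i"
        have yi: "y i = z" and yk: "y k = x k" using k unfolding y_def by auto
        have le: "dist z \<omega> \<le> dist (x k) \<omega>" using vy k yi yk unfolding voronoi_cell_def by auto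
        show False
        proof (cases "lexordp (<) i k")
          case True
          hence "cc k n > 0" unfolding cc_def by simp
          thus False using le zw by auto
        next
          case False
          hence "dist (x k) \<omega> = dist z \<omega>" using le zw unfolding cc_def by auto
          thus False using vy k False yi yk unfolding voronoi_cell_def by auto
        qed
      qed
      have mem: "\<omega> \<in> (cbox 0 One - voronoi_cell I y i) \<inter> voronoi_cell I x i" using w ny vx by simp
      have "\<exists>y\<in>config_space I \<delta>. (\<forall>j\<in>I. j \<noteq> i \<longrightarrow> y j = x j) \<and> dist (x i) (y i) < \<alpha> \<and>
              \<omega> \<in> (cbox 0 One - voronoi_cell I y i) \<inter> voronoi_cell I x i"
        by (rule bexI[OF _ yc]) (use agree dy mem in simp)
      thus "\<omega> \<in> U_set I \<delta> \<alpha> x i" unfolding U_set_def using w by simp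
    qed
  qed
  have "(\<Union>k\<in>I-{i}. \<Union>n. F k n) \<in> sets borel"
    using fin Fclosed by (intro sets.finite_UN sets.countable_nat_UN borel_closed) auto
  hence "voronoi_cell I x i \<inter> (\<Union>k\<in>I-{i}. \<Union>n. F k n) \<in> sets borel"
    using voronoi_borel[OF fin] by (rule sets.Int[rotated])
  thus ?thesis unfolding eq by simp
qed


theorem lemma1:
  fixes I :: "int list set" and e :: nat and \<delta> \<alpha> :: real and i :: "int list"
  assumes "finite I" and "\<forall>l\<in>I. length l = e" and "1 \<le> e" and "e \<le> CARD('d::finite)"
    and "card I \<ge> 2"
    and "\<delta> > 0" and "0 < \<alpha>" and "\<alpha> < \<delta> / 2" and "i \<in> I"
  shows "(\<forall>x\<in>(config_space I \<delta> :: (int list \<Rightarrow> real^'d) set).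
            U_set I \<delta> \<alpha> x i \<in> sets lebesgue) \<and>
         (SUP x\<in>(config_space I \<delta> :: (int list \<Rightarrow> real^'d) set). emeasure lebesgue (U_set I \<delta> \<alpha> x i))
           < ennreal ((real (card I) - 1) * (2 * \<alpha> / \<delta> + \<alpha>) * sqrt 2 ^ (CARD('d) - 1))"
proof -
  note fin = assms(1) and card2 = assms(5) and \<delta> = assms(6) and \<alpha> = assms(7) and i = assms(9)
  define B where "B = (real (card I) - 1) * (\<alpha> * real CARD('d) / \<delta>)"
  have meas: "\<forall>x\<in>(config_space I \<delta> :: (int list \<Rightarrow> real^'d) set). U_set I \<delta> \<alpha> x i \<in> sets lebesgue"
    using U_meas[OF fin _ i \<alpha>] by blast
  have sup: "(SUP x\<in>(config_space I \<delta> :: (int list \<Rightarrow> real^'d) set). emeasure lebesgue (U_set I \<delta> \<alpha> x i))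
      \<le> ennreal B"
    unfolding B_def by (rule SUP_least) (rule U_bound[OF fin _ i \<delta> \<alpha>])
  define s where "s = sqrt 2 ^ (CARD('d) - 1)"
  have s0: "s > 0" unfolding s_def by simp
  have "real (CARD('d) - 1) + 1 \<le> 2 * s" unfolding s_def by (rule sqrt2_bound)
  moreover have "real (CARD('d) - 1) + 1 = real CARD('d)"
    using finite_UNIV_card_ge_0[where 'a='d] by (simp add: of_nat_diff)
  ultimately have ds: "real CARD('d) \<le> 2 * s" by simp
  have c1: "real (card I) - 1 > 0" using card2 by simp
  have "\<alpha> * real CARD('d) / \<delta> \<le> \<alpha> * (2 * s) / \<delta>"
    using ds \<alpha> \<delta> by (intro divide_right_mono mult_left_mono) auto
  also have "\<dots> < (2 * \<alpha> / \<delta> + \<alpha>) * s" using \<alpha> s0 by (simp add: algebra_simps)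
  finally have "\<alpha> * real CARD('d) / \<delta> < (2 * \<alpha> / \<delta> + \<alpha>) * s" .
  hence "B < (real (card I) - 1) * ((2 * \<alpha> / \<delta> + \<alpha>) * s)"
    unfolding B_def using c1 by (rule mult_strict_left_mono)
  hence lt: "B < (real (card I) - 1) * (2 * \<alpha> / \<delta> + \<alpha>) * sqrt 2 ^ (CARD('d) - 1)"
    unfolding s_def by (simp add: mult.assoc)
  have pos: "0 < (real (card I) - 1) * (2 * \<alpha> / \<delta> + \<alpha>) * sqrt 2 ^ (CARD('d) - 1)"
    using c1 \<alpha> \<delta> by (intro mult_pos_pos add_pos_pos divide_pos_pos zero_less_power) auto
  have "ennreal B < ennreal ((real (card I) - 1) * (2 * \<alpha> / \<delta> + \<alpha>) * sqrt 2 ^ (CARD('d) - 1))"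
    by (rule ennreal_lessI[OF pos lt])
  with sup meas show ?thesis by (blast intro: le_less_trans)
qed

end
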